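(* For all $t,s,r\in\Lambda^\infty$: if $t\to^\infty_{\beta\bot}s$ and $s\to^*_\beta r$, then $t\to^\infty_{\beta\bot}r$.
   Context: Fix an infinite set $V$ of variables and a set $C$ of constants with $V\cap C=\emptyset$, containing a distinguished constant $\bot$. $\Lambda^\infty$ is the set of infinitary lambda-terms: all finite and infinite terms generated coinductively by $t ::= c\mid x\mid t\,t\mid\lambda x.t$, identified up to $\alpha$-equivalence; $s[t/x]$ is capture-avoiding substitution; $\equiv$ is identity; an atom is a variable or constant. For $R\subseteq\Lambda^\infty\times\Lambda^\infty$, the compatible closure $\to_R$ is the least relation with $(s,t)\in R\Rightarrow s\to_R t$ and $s\to_R s'\Rightarrow st\to_R s't,\ ts\to_R ts',\ \lambda x.s\to_R\lambda x.s'$. $\to_\beta$ is the compatible closure of $R_\beta=\{((\lambda x.s)t,s[t/x])\}$ and $\to^*_\beta$ its reflexive-transitive closure. A term is in head normal form (hnf) if it is $\lambda x_1\ldots x_m.\,a\,t_1\ldots t_n$ ($m,n\ge0$, $a$ an atom, $a\not\equiv\bot$); $t$ has a hnf if $t\to^*_\beta t'$ for some $t'$ in hnf. $R_\bot=\{(t,\bot)\mid t\text{ has no hnf}, t\not\equiv\bot\}$; $\to_{\beta\bot}$ is the compatible closure of $R_\beta\cup R_\bot$. The infinitary closure $\to^\infty_{\beta\bot}$ is the greatest relation such that whenever $s\to^\infty_{\beta\bot}t$ (with $\to^*$ the reflexive-transitive closure of $\to_{\beta\bot}$): $t\equiv a$ atom and $s\to^*a$; or $t\equiv t_1't_2'$,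 $s\to^*t_1t_2$, $t_i\to^\infty_{\beta\bot}t_i'$; or $t\equiv\lambda x.r'$, $s\to^*\lambda x.r$, $r\to^\infty_{\beta\bot}r'$. *)

theory Defs
  imports Main
begin

text \<open>Infinitary lambda-terms in de Bruijn representation (terms identified up to
alpha-equivalence).\<close>

codatatype 'c trm =
    Var nat
  | Con 'c
  | Bot
  | App "'c trm" "'c trm"
  | Lam "'c trm"

primcorec shift :: "nat \<Rightarrow> 'c trm \<Rightarrow> 'c trm" where
  "shift c t = (case t of
      Var i \<Rightarrow> Var (if c \<le> i then Suc i else i)
    | Con a \<Rightarrow> Con a
    | Bot \<Rightarrow> Bot
    | App a b \<Rightarrow> App (shift c a) (shift c b)
    | Lam b \<Rightarrow> Lam (shift (Suc c) b))"

text \<open>Capture-avoiding substitution of u for index k (u already lifted to depth k),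
decrementing the free indices above k.\<close>
primcorec subst :: "nat \<Rightarrow> 'c trm \<Rightarrow> 'c trm \<Rightarrow> 'c trm" where
  "subst k u t = (case t of
      Var i \<Rightarrow> (if i < k then Var i
                 else if i = k then (case u of
                     Var j \<Rightarrow> Var j
                   | Con a \<Rightarrow> Con a
                   | Bot \<Rightarrow> Bot
                   | App a b \<Rightarrow> App a b
                   | Lam b \<Rightarrow> Lam b)
                 else Var (i - 1))
    | Con a \<Rightarrow> Con a
    | Bot \<Rightarrow> Bot
    | App a b \<Rightarrow> App (subst k u a) (subst k u b)
    | Lam b \<Rightarrow> Lam (subst (Suc k) (shift 0 u) b))"

text \<open>s[t/x] for the outermost binder: (Lam s) t reduces to subst 0 t s.\<close>

inductive beta :: "'c trm \<Rightarrow> 'c trm \<Rightarrow> bool" where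
  root: "beta (App (Lam s) t) (subst 0 t s)"
| appL: "beta s s' \<Longrightarrow> beta (App s t) (App s' t)"
| appR: "beta s s' \<Longrightarrow> beta (App t s) (App t s')"
| lam:  "beta s s' \<Longrightarrow> beta (Lam s) (Lam s')"

abbreviation beta_star :: "'c trm \<Rightarrow> 'c trm \<Rightarrow> bool" where
  "beta_star \<equiv> beta\<^sup>*\<^sup>*"

text \<open>Head normal forms: \<lambda>x1..xm. a t1 .. tn with a an atom other than Bot.\<close>
inductive hd_app :: "'c trm \<Rightarrow> bool" where
  var: "hd_app (Var i)"
| con: "hd_app (Con c)"
| app: "hd_app h \<Longrightarrow> hd_app (App h t)"

inductive hnf :: "'c trm \<Rightarrow> bool" where
  base: "hd_app t \<Longrightarrow> hnf t"
| lam: "hnf t \<Longrightarrow> hnf (Lam t)"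

definition has_hnf :: "'c trm \<Rightarrow> bool" where
  "has_hnf t \<longleftrightarrow> (\<exists>t'. beta_star t t' \<and> hnf t')"

inductive beta_bot :: "'c trm \<Rightarrow> 'c trm \<Rightarrow> bool" where
  root_beta: "beta_bot (App (Lam s) t) (subst 0 t s)"
| root_bot: "\<not> has_hnf t \<Longrightarrow> t \<noteq> Bot \<Longrightarrow> beta_bot t Bot"
| appL: "beta_bot s s' \<Longrightarrow> beta_bot (App s t) (App s' t)"
| appR: "beta_bot s s' \<Longrightarrow> beta_bot (App t s) (App t s')"
| lam:  "beta_bot s s' \<Longrightarrow> beta_bot (Lam s) (Lam s')"

abbreviation beta_bot_star :: "'c trm \<Rightarrow> 'c trm \<Rightarrow> bool" where
  "beta_bot_star \<equiv> beta_bot\<^sup>*\<^sup>*"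

coinductive inf_beta_bot :: "'c trm \<Rightarrow> 'c trm \<Rightarrow> bool" where
  var: "beta_bot_star s (Var i) \<Longrightarrow> inf_beta_bot s (Var i)"
| con: "beta_bot_star s (Con c) \<Longrightarrow> inf_beta_bot s (Con c)"
| bot: "beta_bot_star s Bot \<Longrightarrow> inf_beta_bot s Bot"
| app: "beta_bot_star s (App t1 t2) \<Longrightarrow> inf_beta_bot t1 t1' \<Longrightarrow> inf_beta_bot t2 t2'
          \<Longrightarrow> inf_beta_bot s (App t1' t2')"
| lam: "beta_bot_star s (Lam r) \<Longrightarrow> inf_beta_bot r r' \<Longrightarrow> inf_beta_bot s (Lam r')"

end

theory Submission imports Defs begin

lemma shift_simps[simp]:
  "shift c (Var i) = Var (if c \<le> i then Suc i else i)"
  "shift c (Con cc) = Con cc" "shift c Bot = Bot"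
  "shift c (App a b) = App (shift c a) (shift c b)"
  "shift c (Lam b) = Lam (shift (Suc c) b)"
  by (subst shift.code; simp)+

lemma copy_id: "(case u of Var j \<Rightarrow> Var j | Con a \<Rightarrow> Con a | Bot \<Rightarrow> Bot
                   | App a b \<Rightarrow> App a b | Lam b \<Rightarrow> Lam b) = u"
  by (cases u) auto

lemma subst_simps[simp]:
  "subst k u (Var i) = (if i < k then Var i else if i = k then u else Var (i - 1))"
  "subst k u (Con cc) = Con cc" "subst k u Bot = Bot"
  "subst k u (App a b) = App (subst k u a) (subst k u b)"
  "subst k u (Lam b) = Lam (subst (Suc k) (shift 0 u) b)"
  by (subst subst.code; simp add: copy_id)+

lemma trm_coind:
  assumes "R a b"
  and step: "\<And>a b. R a b \<Longrightarrow> a = b \<or> (\<exists>a1 a2 b1 b2. a = App a1 a2 \<and> b = App b1 b2 \<and> R a1 b1 \<and> R a2 b2)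
      \<or> (\<exists>a1 b1. a = Lam a1 \<and> b = Lam b1 \<and> R a1 b1)"
  shows "a = b"
proof -
  have "R a b \<or> a = b" using assms(1) by simp
  then show ?thesis
  proof (coinduction arbitrary: a b rule: trm.coinduct)
    case (Eq_trm a b)
    then show ?case
    proof
      assume "R a b"
      from step[OF this] show ?thesis by (elim disjE exE conjE) auto
    next
      assume "a = b" then show ?thesis by (cases a) auto
    qed
  qed
qed

lemma E0: "d \<le> c \<Longrightarrow> shift d (shift c Q) = shift (Suc c) (shift d Q)"
proof -
  assume "d \<le> c"
  then have "\<exists>c d Q. x = shift d (shift c Q) \<and> y = shift (Suc c) (shift d Q) \<and> d \<le> c"
    if "x = shift d (shift c Q)" "y = shift (Suc c) (shift d Q)" for x y using that by blast
  then show ?thesis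
  proof (intro trm_coind[where R="\<lambda>x y. \<exists>c d Q. x = shift d (shift c Q) \<and> y = shift (Suc c) (shift d Q) \<and> d \<le> c"])
    fix a b assume "\<exists>c d Q. a = shift d (shift c Q) \<and> b = shift (Suc c) (shift d Q) \<and> d \<le> c"
    then obtain c d Q where h: "a = shift d (shift c Q)" "b = shift (Suc c) (shift d Q)" "d \<le> c" by blast
    show "a = b \<or> (\<exists>a1 a2 b1 b2. a = App a1 a2 \<and> b = App b1 b2 \<and> (\<exists>c d Q. a1 = shift d (shift c Q) \<and> b1 = shift (Suc c) (shift d Q) \<and> d \<le> c) \<and> (\<exists>c d Q. a2 = shift d (shift c Q) \<and> b2 = shift (Suc c) (shift d Q) \<and> d \<le> c))
      \<or> (\<exists>a1 b1. a = Lam a1 \<and> b = Lam b1 \<and> (\<exists>c d Q. a1 = shift d (shift c Q) \<and> b1 = shift (Suc c) (shift d Q) \<and> d \<le> c))"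
      using h by (cases Q) auto
  qed auto
qed
lemma E0': "shift 0 (shift c Q) = shift (Suc c) (shift 0 Q)" by (rule E0) simp

lemma E1: "j \<le> c \<Longrightarrow> shift c (subst j Q P) = subst j (shift c Q) (shift (Suc c) P)"
proof (rule trm_coind[where R="\<lambda>x y. \<exists>c j Q P. x = shift c (subst j Q P) \<and> y = subst j (shift c Q) (shift (Suc c) P) \<and> j \<le> c"])
  fix a b assume "\<exists>c j Q P. a = shift c (subst j Q P) \<and> b = subst j (shift c Q) (shift (Suc c) P) \<and> j \<le> c"
  then obtain c j Q P where h: "a = shift c (subst j Q P)" "b = subst j (shift c Q) (shift (Suc c) P)" "j \<le> c" by blast
  show "a = b \<or> (\<exists>a1 a2 b1 b2. a = App a1 a2 \<and> b = App b1 b2 \<and> (\<exists>c j Q P. a1 = shift c (subst j Q P) \<and> b1 = subst j (shift c Q) (shift (Suc c) P) \<and> j \<le> c) \<and> (\<exists>c j Q P. a2 = shift c (subst j Q P) \<and> b2 = subst j (shift c Q) (shift (Suc c) P) \<and> j \<le> c))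
      \<or> (\<exists>a1 b1. a = Lam a1 \<and> b = Lam b1 \<and> (\<exists>c j Q P. a1 = shift c (subst j Q P) \<and> b1 = subst j (shift c Q) (shift (Suc c) P) \<and> j \<le> c))"
    using h by (cases P) (auto simp: E0')
qed auto

lemma E3: "c \<le> k \<Longrightarrow> shift c (subst k N Q) = subst (Suc k) (shift c N) (shift c Q)"
proof (rule trm_coind[where R="\<lambda>x y. \<exists>c k N Q. x = shift c (subst k N Q) \<and> y = subst (Suc k) (shift c N) (shift c Q) \<and> c \<le> k"])
  fix a b assume "\<exists>c k N Q. a = shift c (subst k N Q) \<and> b = subst (Suc k) (shift c N) (shift c Q) \<and> c \<le> k"
  then obtain c k N Q where h: "a = shift c (subst k N Q)" "b = subst (Suc k) (shift c N) (shift c Q)" "c \<le> k" by blast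
  show "a = b \<or> (\<exists>a1 a2 b1 b2. a = App a1 a2 \<and> b = App b1 b2 \<and> (\<exists>c k N Q. a1 = shift c (subst k N Q) \<and> b1 = subst (Suc k) (shift c N) (shift c Q) \<and> c \<le> k) \<and> (\<exists>c k N Q. a2 = shift c (subst k N Q) \<and> b2 = subst (Suc k) (shift c N) (shift c Q) \<and> c \<le> k))
      \<or> (\<exists>a1 b1. a = Lam a1 \<and> b = Lam b1 \<and> (\<exists>c k N Q. a1 = shift c (subst k N Q) \<and> b1 = subst (Suc k) (shift c N) (shift c Q) \<and> c \<le> k))"
    using h by (cases Q) (auto simp: E0')
qed auto

lemma E4: "subst j X (shift j N) = N"
proof (rule trm_coind[where R="\<lambda>x y. \<exists>j X N. x = subst j X (shift j N) \<and> y = N"])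
  fix a b assume "\<exists>j X N. a = subst j X (shift j N) \<and> b = N"
  then obtain j X N where h: "a = subst j X (shift j N)" "b = N" by blast
  show "a = b \<or> (\<exists>a1 a2 b1 b2. a = App a1 a2 \<and> b = App b1 b2 \<and> (\<exists>j X N. a1 = subst j X (shift j N) \<and> b1 = N) \<and> (\<exists>j X N. a2 = subst j X (shift j N) \<and> b2 = N))
      \<or> (\<exists>a1 b1. a = Lam a1 \<and> b = Lam b1 \<and> (\<exists>j X N. a1 = subst j X (shift j N) \<and> b1 = N))"
    using h by (cases N) auto
qed auto

lemma E2: "j \<le> k \<Longrightarrow> subst k N (subst j Q P) = subst j (subst k N Q) (subst (Suc k) (shift j N) P)"
proof (rule trm_coind[where R="\<lambda>x y. \<exists>k j N Q P. x = subst k N (subst j Q P) \<and> y = subst j (subst k N Q) (subst (Suc k) (shift j N) P) \<and> j \<le> k"])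
  fix a b assume "\<exists>k j N Q P. a = subst k N (subst j Q P) \<and> b = subst j (subst k N Q) (subst (Suc k) (shift j N) P) \<and> j \<le> k"
  then obtain k j N Q P where h: "a = subst k N (subst j Q P)" "b = subst j (subst k N Q) (subst (Suc k) (shift j N) P)" "j \<le> k" by blast
  show "a = b \<or> (\<exists>a1 a2 b1 b2. a = App a1 a2 \<and> b = App b1 b2 \<and> (\<exists>k j N Q P. a1 = subst k N (subst j Q P) \<and> b1 = subst j (subst k N Q) (subst (Suc k) (shift j N) P) \<and> j \<le> k) \<and> (\<exists>k j N Q P. a2 = subst k N (subst j Q P) \<and> b2 = subst j (subst k N Q) (subst (Suc k) (shift j N) P) \<and> j \<le> k))
      \<or> (\<exists>a1 b1. a = Lam a1 \<and> b = Lam b1 \<and> (\<exists>k j N Q P. a1 = subst k N (subst j Q P) \<and> b1 = subst j (subst k N Q) (subst (Suc k) (shift j N) P) \<and> j \<le> k))"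
  proof (cases P)
    case (Lam P0)
    have "a = Lam (subst (Suc k) (shift 0 N) (subst (Suc j) (shift 0 Q) P0))" using h Lam by simp
    moreover have "b = Lam (subst (Suc j) (subst (Suc k) (shift 0 N) (shift 0 Q)) (subst (Suc (Suc k)) (shift (Suc j) (shift 0 N)) P0))"
      using h Lam by (simp add: E0' E3)
    ultimately show ?thesis using h by blast
  qed (use h in \<open>auto simp: E4\<close>)
qed blast

definition lift :: "(nat \<Rightarrow> nat option) \<Rightarrow> nat \<Rightarrow> nat option" where
  "lift g i = (case i of 0 \<Rightarrow> Some 0 | Suc i \<Rightarrow> map_option Suc (g i))"

definition liftn :: "nat \<Rightarrow> (nat \<Rightarrow> nat option) \<Rightarrow> nat \<Rightarrow> nat option" where
  "liftn j g = (lift ^^ j) g"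

lemma liftn_0[simp]: "liftn 0 g = g" by (simp add: liftn_def)
lemma liftn_Suc: "liftn (Suc j) g = lift (liftn j g)" by (simp add: liftn_def)

lemma liftn_lt: "i < j \<Longrightarrow> liftn j g i = Some i"
proof (induction j arbitrary: i)
  case (Suc j) then show ?case by (cases i) (auto simp: liftn_Suc lift_def)
qed simp

lemma liftn_ge: "j \<le> i \<Longrightarrow> liftn j g i = map_option (\<lambda>x. x + j) (g (i - j))"
proof (induction j arbitrary: i)
  case 0 then show ?case by (simp add: option.map_ident)
next
  case (Suc j) then show ?case
    by (cases i) (auto simp: liftn_Suc lift_def option.map_comp o_def)
qed

inductive hspine :: "(nat \<Rightarrow> nat option) \<Rightarrow> 'c trm \<Rightarrow> bool" where
  hvar: "g i = None \<Longrightarrow> hspine g (Var i)"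
| happ: "hspine g u \<Longrightarrow> hspine g (App u v)"

coinductive inst :: "(nat \<Rightarrow> nat option) \<Rightarrow> 'c trm \<Rightarrow> 'c trm \<Rightarrow> bool" where
  hole: "hspine g u \<Longrightarrow> inst g u M"
| var: "g i = Some j \<Longrightarrow> inst g (Var i) (Var j)"
| con: "inst g (Con c) (Con c)"
| bot: "inst g Bot Bot"
| app: "inst g u1 M1 \<Longrightarrow> inst g u2 M2 \<Longrightarrow> inst g (App u1 u2) (App M1 M2)"
| lam: "inst (lift g) u M \<Longrightarrow> inst g (Lam u) (Lam M)"

lemma hspine_hd: "hspine g u \<Longrightarrow> hd_app u"
  by (induction rule: hspine.induct) (auto intro: hd_app.intros)

lemma hspine_shift: "hspine (liftn c h) q \<Longrightarrow> hspine (liftn c (lift h)) (shift c q)"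
proof (induction "liftn c h" q rule: hspine.induct)
  case (hvar i)
  then have "c \<le> i" by (metis liftn_lt not_le option.distinct(1))
  then show ?case using hvar by (auto simp: liftn_ge lift_def Suc_diff_le intro!: hspine.hvar)
qed (auto intro: hspine.intros)

lemma inst_shift: "inst (liftn c h) q Q \<Longrightarrow> inst (liftn c (lift h)) (shift c q) (shift c Q)"
proof (coinduction arbitrary: c q Q)
  case inst
  then show ?case
  proof (cases rule: inst.cases)
    case (hole)
    then show ?thesis by (intro disjI1) (auto intro: hspine_shift)
  next
    case (var i j)
    then show ?thesis
    proof (cases "i < c")
      case True then show ?thesis using var by (auto simp: liftn_lt)
    next
      case False
      then obtain m where "h (i - c) = Some m" "j = m + c" using var by (auto simp: liftn_ge)
      then show ?thesis using var False
        by (auto simp: liftn_ge lift_def Suc_diff_le split: nat.splits)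
    qed
  next
    case (lam u M)
    then show ?thesis by (auto simp: liftn_Suc[symmetric])
  qed auto
qed
lemma hspine_subst: "hspine (liftn j (lift g)) p \<Longrightarrow> hspine (liftn j g) (subst j q p)"
proof (induction "liftn j (lift g)" p rule: hspine.induct)
  case (hvar i)
  have "j < i"
  proof (rule ccontr)
    assume "\<not> j < i"
    then show False using hvar
      by (cases "i < j") (auto simp: liftn_lt liftn_ge lift_def)
  qed
  then obtain i' where i': "i = Suc i'" "j \<le> i'" by (cases i) auto
  then have "g (i' - j) = None" using hvar by (auto simp: liftn_ge lift_def Suc_diff_le)
  then show ?case using i' by (auto simp: liftn_ge intro!: hspine.hvar)
qed (auto intro: hspine.intros)

lemma inst_shift0: "inst h q Q \<Longrightarrow> inst (lift h) (shift 0 q) (shift 0 Q)"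
  using inst_shift[of 0 h q Q] by simp

lemma inst_subst:
  "inst (liftn j (lift g)) p P \<Longrightarrow> inst (liftn j g) q Q \<Longrightarrow> inst (liftn j g) (subst j q p) (subst j Q P)"
proof (coinduction arbitrary: j p P q Q)
  case inst
  from inst(1) show ?case
  proof (cases rule: inst.cases)
    case hole
    then show ?thesis by (intro disjI1) (auto intro: hspine_subst)
  next
    case (var i m)
    consider "i < j" | "i = j" | "j < i" by linarith
    then show ?thesis
    proof cases
      case 1 then show ?thesis using var by (auto simp: liftn_lt)
    next
      case 2
      then have "m = j" using var by (auto simp: liftn_ge lift_def)
      then have eqs: "subst j q p = q" "subst j Q P = Q" using var 2 by auto
      show ?thesis unfolding eqs using inst(2) by (cases rule: inst.cases) auto
    next
      case 3
      then obtain i' where i': "i = Suc i'" "j \<le> i'" by (cases i) auto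
      then obtain m0 where m0: "g (i' - j) = Some m0" "m = Suc m0 + j"
        using var by (auto simp: liftn_ge lift_def Suc_diff_le)
      then show ?thesis using var i' by (auto simp: liftn_ge)
    qed
  next
    case (app u1 M1 u2 M2)
    then show ?thesis using inst(2)
      by simp (smt (verit))
  next
    case (lam u M)
    then show ?thesis using inst(2)
      by (auto simp: liftn_Suc[symmetric] intro!: exI[of _ "Suc j"] inst_shift0[of "liftn j g", simplified liftn_Suc[symmetric]])
  qed auto
qed

definition g0 :: "nat \<Rightarrow> nat option" where "g0 i = (case i of 0 \<Rightarrow> None | Suc i \<Rightarrow> Some i)"
definition g1 :: "nat \<Rightarrow> nat option" where "g1 i = Some (Suc i)"

lemma inst_subst_self: "inst (liftn k g0) u (subst k N u)"
proof (coinduction arbitrary: k u N)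
  case inst
  show ?case
  proof (cases u)
    case (Var i)
    consider "i < k" | "i = k" | "k < i" by linarith
    then show ?thesis
    proof cases
      case 1 then show ?thesis using Var by (auto simp: liftn_lt)
    next
      case 2 then show ?thesis using Var by (auto simp: liftn_ge g0_def intro!: hspine.hvar)
    next
      case 3
      then obtain i' where "i = Suc i'" "k \<le> i'" by (cases i) auto
      then show ?thesis using Var by (auto simp: liftn_ge g0_def Suc_diff_le)
    qed
  next
    case (Lam b)
    then show ?thesis by (auto simp: liftn_Suc[symmetric])
  qed auto
qed

lemma inst_shift_self: "inst (liftn c g1) u (shift c u)"
proof (coinduction arbitrary: c u)
  case inst
  show ?case
  proof (cases u)
    case (Var i)
    then show ?thesis
    proof (cases "i < c")
      case True then show ?thesis using Var by (auto simp: liftn_lt)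
    next
      case False then show ?thesis using Var by (auto simp: liftn_ge g1_def)
    qed
  next
    case (Lam b)
    then show ?thesis by (auto simp: liftn_Suc[symmetric])
  qed auto
qed

lemma beta_star_appL: "beta\<^sup>*\<^sup>* a a' \<Longrightarrow> beta\<^sup>*\<^sup>* (App a b) (App a' b)"
  by (induction rule: rtranclp_induct) (auto intro: rtranclp.rtrancl_into_rtrancl beta.appL)
lemma beta_star_appR: "beta\<^sup>*\<^sup>* a a' \<Longrightarrow> beta\<^sup>*\<^sup>* (App b a) (App b a')"
  by (induction rule: rtranclp_induct) (auto intro: rtranclp.rtrancl_into_rtrancl beta.appR)
lemma beta_star_lam: "beta\<^sup>*\<^sup>* a a' \<Longrightarrow> beta\<^sup>*\<^sup>* (Lam a) (Lam a')"
  by (induction rule: rtranclp_induct) (auto intro: rtranclp.rtrancl_into_rtrancl beta.lam)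

lemma sim: "beta M M' \<Longrightarrow> inst g u M \<Longrightarrow> \<exists>u'. beta\<^sup>*\<^sup>* u u' \<and> inst g u' M'"
proof (induction arbitrary: g u rule: beta.induct)
  case (root s t)
  from root show ?case
  proof (cases rule: inst.cases)
    case hole then show ?thesis by (auto intro: inst.hole)
  next
    case (app u1 u2)
    from app(2) show ?thesis
    proof (cases rule: inst.cases)
      case hole then show ?thesis using app by (auto intro!: inst.hole hspine.happ)
    next
      case (lam p)
      have "beta u (subst 0 u2 p)" using app lam by (auto intro: beta.root)
      moreover have "inst g (subst 0 u2 p) (subst 0 t s)"
        using inst_subst[of 0 g p s u2 t] lam app by simp
      ultimately show ?thesis by blast
    qed
  qed
next
  case (appL s s' t)
  from appL.prems show ?case
  proof (cases rule: inst.cases)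
    case hole then show ?thesis by (auto intro: inst.hole)
  next
    case (app u1 u2)
    then obtain u1' where "beta\<^sup>*\<^sup>* u1 u1'" "inst g u1' s'" using appL.IH by blast
    then show ?thesis using app by (auto intro!: beta_star_appL inst.app)
  qed
next
  case (appR s s' t)
  from appR.prems show ?case
  proof (cases rule: inst.cases)
    case hole then show ?thesis by (auto intro: inst.hole)
  next
    case (app u1 u2)
    then obtain u2' where "beta\<^sup>*\<^sup>* u2 u2'" "inst g u2' s'" using appR.IH by blast
    then show ?thesis using app by (auto intro!: beta_star_appR inst.app)
  qed
next
  case (lam s s')
  from lam.prems show ?case
  proof (cases rule: inst.cases)
    case hole then show ?thesis by (auto intro: inst.hole)
  next
    case (lam u0)
    then obtain u0' where "beta\<^sup>*\<^sup>* u0 u0'" "inst (lift g) u0' s'" using lam.IH by blast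
    then show ?thesis using lam by (auto intro!: beta_star_lam inst.lam)
  qed
qed

lemma sim_star: "beta\<^sup>*\<^sup>* M M' \<Longrightarrow> inst g u M \<Longrightarrow> \<exists>u'. beta\<^sup>*\<^sup>* u u' \<and> inst g u' M'"
proof (induction arbitrary: u rule: rtranclp_induct)
  case base then show ?case by blast
next
  case (step y z)
  then obtain u1 where "beta\<^sup>*\<^sup>* u u1" "inst g u1 y" by blast
  with sim[OF step(2)] obtain u2 where "beta\<^sup>*\<^sup>* u1 u2" "inst g u2 z" by blast
  then show ?case using \<open>beta\<^sup>*\<^sup>* u u1\<close> by (meson rtranclp_trans)
qed

lemma hd_back: "hd_app M \<Longrightarrow> inst g u M \<Longrightarrow> hd_app u"
proof (induction arbitrary: u rule: hd_app.induct)
  case (var i) then show ?case by (cases rule: inst.cases) (auto intro: hd_app.intros hspine_hd)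
next
  case (con c) then show ?case by (cases rule: inst.cases) (auto intro: hd_app.intros hspine_hd)
next
  case (app h t) from app.prems show ?case by (cases rule: inst.cases) (auto intro: hd_app.intros hspine_hd app.IH)
qed

lemma hnf_back: "hnf M \<Longrightarrow> inst g u M \<Longrightarrow> hnf u"
proof (induction arbitrary: g u rule: hnf.induct)
  case (base t) then show ?case by (auto intro: hnf.base hd_back)
next
  case (lam t) from lam.prems show ?case
    by (cases rule: inst.cases) (auto intro: hnf.intros hspine_hd lam.IH)
qed

lemma has_hnf_back: "inst g u M \<Longrightarrow> has_hnf M \<Longrightarrow> has_hnf u"
  unfolding has_hnf_def using sim_star hnf_back by metis

lemma no_hnf_subst: "\<not> has_hnf u \<Longrightarrow> \<not> has_hnf (subst k N u)"
  using has_hnf_back inst_subst_self by blast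

lemma no_hnf_shift: "\<not> has_hnf u \<Longrightarrow> \<not> has_hnf (shift c u)"
  using has_hnf_back inst_shift_self by blast

lemma bb_star_appL: "beta_bot\<^sup>*\<^sup>* a a' \<Longrightarrow> beta_bot\<^sup>*\<^sup>* (App a b) (App a' b)"
  by (induction rule: rtranclp_induct) (auto intro: rtranclp.rtrancl_into_rtrancl beta_bot.appL)
lemma bb_star_appR: "beta_bot\<^sup>*\<^sup>* a a' \<Longrightarrow> beta_bot\<^sup>*\<^sup>* (App b a) (App b a')"
  by (induction rule: rtranclp_induct) (auto intro: rtranclp.rtrancl_into_rtrancl beta_bot.appR)
lemma bb_star_lam: "beta_bot\<^sup>*\<^sup>* a a' \<Longrightarrow> beta_bot\<^sup>*\<^sup>* (Lam a) (Lam a')"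
  by (induction rule: rtranclp_induct) (auto intro: rtranclp.rtrancl_into_rtrancl beta_bot.lam)

lemma shift_Bot_iff: "shift c t = Bot \<longleftrightarrow> t = Bot"
  by (cases t) auto

lemma L1: "beta_bot M M' \<Longrightarrow> beta_bot\<^sup>*\<^sup>* (shift c M) (shift c M')"
proof (induction arbitrary: c rule: beta_bot.induct)
  case (root_beta s t)
  have "beta_bot (shift c (App (Lam s) t)) (subst 0 (shift c t) (shift (Suc c) s))"
    by (simp add: beta_bot.root_beta)
  then show ?case by (simp add: E1)
next
  case (root_bot t)
  then show ?case by (auto intro!: r_into_rtranclp beta_bot.root_bot no_hnf_shift simp: shift_Bot_iff)
qed (auto intro: bb_star_appL bb_star_appR bb_star_lam)

lemma L2: "beta_bot M M' \<Longrightarrow> beta_bot\<^sup>*\<^sup>* (subst k N M) (subst k N M')"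
proof (induction arbitrary: k N rule: beta_bot.induct)
  case (root_beta s t)
  have "beta_bot (subst k N (App (Lam s) t)) (subst 0 (subst k N t) (subst (Suc k) (shift 0 N) s))"
    by (simp add: beta_bot.root_beta)
  then show ?case by (simp add: E2)
next
  case (root_bot t)
  show ?case
  proof (cases "subst k N t = Bot")
    case True then show ?thesis by (metis rtranclp.rtrancl_refl subst_simps(3))
  next
    case False then show ?thesis using root_bot
      by (auto intro!: r_into_rtranclp beta_bot.root_bot no_hnf_subst)
  qed
qed (auto intro: bb_star_appL bb_star_appR bb_star_lam)

lemma L1s: "beta_bot\<^sup>*\<^sup>* M M' \<Longrightarrow> beta_bot\<^sup>*\<^sup>* (shift c M) (shift c M')"
  by (induction rule: rtranclp_induct) (auto dest: L1[of _ _ c])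

lemma L2s: "beta_bot\<^sup>*\<^sup>* M M' \<Longrightarrow> beta_bot\<^sup>*\<^sup>* (subst k N M) (subst k N M')"
  by (induction rule: rtranclp_induct) (auto dest: L2[of _ _ k N])

lemma I0: "beta_bot\<^sup>*\<^sup>* s s' \<Longrightarrow> inf_beta_bot s' t \<Longrightarrow> inf_beta_bot s t"
  by (erule inf_beta_bot.cases) (auto intro: inf_beta_bot.intros rtranclp_trans)

lemma I1: "inf_beta_bot M M' \<Longrightarrow> inf_beta_bot (shift c M) (shift c M')"
proof (coinduction arbitrary: c M M')
  case inf_beta_bot
  then show ?case
  proof (cases rule: inf_beta_bot.cases)
    case (var i) then show ?thesis using L1s[of M "Var i" c] by auto
  next
    case (con cc) then show ?thesis using L1s[of M "Con cc" c] by auto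
  next
    case bot then show ?thesis using L1s[of M Bot c] by auto
  next
    case (app t1 t2 t1' t2') then show ?thesis using L1s[of M "App t1 t2" c] by (auto; blast)
  next
    case (lam r r') then show ?thesis using L1s[of M "Lam r" c] by (auto; blast)
  qed
qed

lemma I2: "inf_beta_bot u s \<Longrightarrow> inf_beta_bot N N' \<Longrightarrow> inf_beta_bot (subst k N u) (subst k N' s)"
proof (coinduction arbitrary: k N N' u s)
  case inf_beta_bot
  from inf_beta_bot(1) show ?case
  proof (cases rule: inf_beta_bot.cases)
    case (var i)
    show ?thesis
    proof (cases "i = k")
      case True
      have "inf_beta_bot (subst k N u) N'"
        using I0[OF L2s[OF var(2), of k N]] True inf_beta_bot(2) by simp
      then show ?thesis using var True
        by (cases rule: inf_beta_bot.cases) auto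
    next
      case False then show ?thesis using var L2s[OF var(2), of k N] by auto
    qed
  next
    case (con cc) then show ?thesis using L2s[of u "Con cc" k N] by auto
  next
    case bot then show ?thesis using L2s[of u Bot k N] by auto
  next
    case (app t1 t2 t1' t2') then show ?thesis using L2s[of u "App t1 t2" k N] inf_beta_bot(2) by (auto; blast)
  next
    case (lam r r') then show ?thesis using L2s[of u "Lam r" k N] I1[OF inf_beta_bot(2), of 0] by (auto; blast)
  qed
qed

lemma main1: "beta s r \<Longrightarrow> inf_beta_bot t s \<Longrightarrow> inf_beta_bot t r"
proof (induction arbitrary: t rule: beta.induct)
  case (root b a)
  from root obtain t1 t2 where h1: "beta_bot\<^sup>*\<^sup>* t (App t1 t2)" "inf_beta_bot t1 (Lam b)" "inf_beta_bot t2 a"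
    by (cases rule: inf_beta_bot.cases) auto
  from h1(2) obtain u where h2: "beta_bot\<^sup>*\<^sup>* t1 (Lam u)" "inf_beta_bot u b"
    by (cases rule: inf_beta_bot.cases) auto
  have "beta_bot\<^sup>*\<^sup>* t (App (Lam u) t2)"
    using h1(1) h2(1) by (meson bb_star_appL rtranclp_trans)
  then have "beta_bot\<^sup>*\<^sup>* t (subst 0 t2 u)"
    by (meson beta_bot.root_beta rtranclp.rtrancl_into_rtrancl)
  moreover have "inf_beta_bot (subst 0 t2 u) (subst 0 a b)"
    using I2 h1 h2 by blast
  ultimately show ?case using I0 by blast
next
  case (appL s s' t0)
  from appL.prems show ?case
    by (cases rule: inf_beta_bot.cases) (auto intro: inf_beta_bot.app appL.IH)
next
  case (appR s s' t0)
  from appR.prems show ?case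
    by (cases rule: inf_beta_bot.cases) (auto intro: inf_beta_bot.app appR.IH)
next
  case (lam s s')
  from lam.prems show ?case
    by (cases rule: inf_beta_bot.cases) (auto intro: inf_beta_bot.lam lam.IH)
qed

theorem corollary5p33:
  fixes t s r :: "'c trm"
  assumes "inf_beta_bot t s" and "beta_star s r"
  shows "inf_beta_bot t r"
  using assms(2,1) by (induction rule: rtranclp_induct) (auto intro: main1)
end
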